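(* A linear dendron $T$ is reducible if and only if $T$ is a star $S_n$ whose number of states $n$ is a composite number.
   Context: A finite dynamical system (FDS) is a function $A:S_A\to S_A$ on a finite set, considered up to isomorphism of functional graphs (arcs $x\to A(x)$). The product $AB$ acts on $S_A\times S_B$ by $(a,b)\mapsto(A(a),B(b))$. An FDS $T$ is reducible if $T=AB$ for FDSs $A,B$ each having strictly fewer states than $T$. A dendron is an FDS with connected functional graph and a fixpoint. A predecessor of a state $s$ is a state $t$ with $A(t)=s$. A linear dendron is a dendron in which every state other than the fixpoint has at most one predecessor. The depth of a dendron is the maximum, over states $s$, of the least $m\ge 0$ such that the $m$-fold iterate of the map sends $s$ to the fixpoint. A star $S_n$ is a linear dendron of depth at most $1$ with $n$ states (a fixpoint together with $n-1$ states mapped directly to it). *)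

theory Defs
  imports "HOL-Computational_Algebra.Primes"
begin

text \<open>A finite dynamical system is represented by a finite state set S together
with a map f that sends S into S (values of f outside S are irrelevant).\<close>

definition fds :: "'a set \<Rightarrow> ('a \<Rightarrow> 'a) \<Rightarrow> bool" where
  "fds S f \<longleftrightarrow> finite S \<and> (\<forall>x\<in>S. f x \<in> S)"

definition fds_iso :: "'a set \<Rightarrow> ('a \<Rightarrow> 'a) \<Rightarrow> 'b set \<Rightarrow> ('b \<Rightarrow> 'b) \<Rightarrow> bool" where
  "fds_iso S f S' g \<longleftrightarrow> (\<exists>h. bij_betw h S S' \<and> (\<forall>x\<in>S. h (f x) = g (h x)))"

definition fds_prod_map :: "('a \<Rightarrow> 'a) \<Rightarrow> ('b \<Rightarrow> 'b) \<Rightarrow> ('a \<times> 'b \<Rightarrow> 'a \<times> 'b)" where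
  "fds_prod_map fA fB = (\<lambda>(a, b). (fA a, fB b))"

text \<open>Reducibility: T is isomorphic to a product AB of FDSs with strictly fewer states.
Every FDS is isomorphic to one on a subset of nat, so factors are taken on nat.\<close>
definition reducible :: "'a set \<Rightarrow> ('a \<Rightarrow> 'a) \<Rightarrow> bool" where
  "reducible S f \<longleftrightarrow>
     (\<exists>(SA :: nat set) fA (SB :: nat set) fB.
        fds SA fA \<and> fds SB fB \<and> card SA < card S \<and> card SB < card S \<and>
        fds_iso (SA \<times> SB) (fds_prod_map fA fB) S f)"

definition arcs :: "'a set \<Rightarrow> ('a \<Rightarrow> 'a) \<Rightarrow> ('a \<times> 'a) set" where
  "arcs S f = {(x, f x) | x. x \<in> S}"

definition fds_connected :: "'a set \<Rightarrow> ('a \<Rightarrow> 'a) \<Rightarrow> bool" where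
  "fds_connected S f \<longleftrightarrow> S \<noteq> {} \<and>
     (\<forall>x\<in>S. \<forall>y\<in>S. (x, y) \<in> (arcs S f \<union> (arcs S f)\<inverse>)\<^sup>*)"

definition dendron :: "'a set \<Rightarrow> ('a \<Rightarrow> 'a) \<Rightarrow> bool" where
  "dendron S f \<longleftrightarrow> fds S f \<and> fds_connected S f \<and> (\<exists>z\<in>S. f z = z)"

definition fixpt :: "'a set \<Rightarrow> ('a \<Rightarrow> 'a) \<Rightarrow> 'a" where
  "fixpt S f = (THE z. z \<in> S \<and> f z = z)"

definition linear_dendron :: "'a set \<Rightarrow> ('a \<Rightarrow> 'a) \<Rightarrow> bool" where
  "linear_dendron S f \<longleftrightarrow> dendron S f \<and>
     (\<forall>s\<in>S. f s \<noteq> s \<longrightarrow> card {t \<in> S. f t = s} \<le> 1)"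

definition depth :: "'a set \<Rightarrow> ('a \<Rightarrow> 'a) \<Rightarrow> nat" where
  "depth S f = Max ((\<lambda>s. LEAST m. (f ^^ m) s = fixpt S f) ` S)"

definition is_star :: "'a set \<Rightarrow> ('a \<Rightarrow> 'a) \<Rightarrow> bool" where
  "is_star S f \<longleftrightarrow> linear_dendron S f \<and> depth S f \<le> 1"

definition composite :: "nat \<Rightarrow> bool" where
  "composite n \<longleftrightarrow> n > 1 \<and> \<not> prime n"

end

theory Submission
  imports Defs "HOL-Combinatorics.Transposition"
begin

lemma reach_fix:
  assumes conn: "fds_connected S f" and fs: "fds S f" and z: "z \<in> S" "f z = z" and x: "x \<in> S"
  shows "\<exists>m. (f ^^ m) x = z"
proof -
  let ?r = "arcs S f \<union> (arcs S f)\<inverse>"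
  have "(z, x) \<in> ?r\<^sup>*" using conn z x unfolding fds_connected_def by blast
  then show ?thesis
  proof (induction rule: rtrancl_induct)
    case base
    show ?case by (rule exI[of _ 0]) simp
  next
    case (step y w)
    then obtain m where m: "(f ^^ m) y = z" by blast
    from step(2) show ?case
    proof
      assume "(y, w) \<in> arcs S f"
      then have "w = f y" unfolding arcs_def by auto
      then have "(f ^^ m) w = z" using m z by (metis funpow_swap1)
      then show ?thesis by blast
    next
      assume "(y, w) \<in> (arcs S f)\<inverse>"
      then have "y = f w" unfolding arcs_def by auto
      then have "(f ^^ Suc m) w = z" using m by (simp add: funpow_Suc_right del: funpow.simps)
      then show ?thesis by blast
    qed
  qed
qed

lemma fixpt_eq:
  assumes "dendron S f" "z \<in> S" "f z = z"
  shows "fixpt S f = z"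
proof -
  have "w = z" if w: "w \<in> S" "f w = w" for w
  proof -
    have "fds_connected S f" "fds S f" using assms(1) unfolding dendron_def by blast+
    then obtain m where "(f ^^ m) w = z" using reach_fix[of S f z w, OF _ _ assms(2,3) w(1)] by blast
    moreover have "(f ^^ m) w = w"
    proof (induction m)
      case 0 show ?case by simp
    next
      case (Suc m) then show ?case using w(2) by simp
    qed
    ultimately show ?thesis by simp
  qed
  note u = this
  show ?thesis unfolding fixpt_def
  proof (rule the_equality)
    show "z \<in> S \<and> f z = z" using assms by blast
  next
    fix w assume "w \<in> S \<and> f w = w"
    then show "w = z" using u by blast
  qed
qed

lemma star_char:
  assumes "dendron S f" "z \<in> S" "f z = z"
  shows "depth S f \<le> 1 \<longleftrightarrow> (\<forall>s\<in>S. f s = z)"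
proof -
  have fp: "fixpt S f = z" by (rule fixpt_eq[OF assms])
  have fin: "finite S" using assms(1) unfolding dendron_def fds_def by blast
  have ne: "S \<noteq> {}" using assms(2) by blast
  show ?thesis
  proof
    assume d: "depth S f \<le> 1"
    show "\<forall>s\<in>S. f s = z"
    proof
      fix s assume s: "s \<in> S"
      have "fds_connected S f" "fds S f" using assms(1) unfolding dendron_def by blast+
      then obtain m where m: "(f ^^ m) s = z" using reach_fix[of S f z s, OF _ _ assms(2,3) s] by blast
      define L where "L = (LEAST m. (f ^^ m) s = z)"
      have "L \<le> depth S f" unfolding depth_def fp L_def
        by (rule Max_ge[OF finite_imageI[OF fin] imageI[OF s]])
      with d have L: "L \<le> 1" by simp
      have LI: "(f ^^ L) s = z" unfolding L_def using m by (rule LeastI)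
      have "L = 0 \<or> L = 1" using L by linarith
      then show "f s = z"
      proof
        assume "L = 0" then have "s = z" using LI by simp
        then show ?thesis using assms(3) by simp
      next
        assume "L = 1" then show ?thesis using LI by simp
      qed
    qed
  next
    assume a: "\<forall>s\<in>S. f s = z"
    have b: "(LEAST m. (f ^^ m) s = z) \<le> 1" if "s \<in> S" for s
    proof (rule Least_le)
      show "(f ^^ 1) s = z" using a that by simp
    qed
    show "depth S f \<le> 1" unfolding depth_def fp
    proof (rule Max.boundedI)
      show "finite ((\<lambda>s. LEAST m. (f ^^ m) s = z) ` S)" using fin by blast
      show "(\<lambda>s. LEAST m. (f ^^ m) s = z) ` S \<noteq> {}" using ne by blast
      show "\<And>a. a \<in> (\<lambda>s. LEAST m. (f ^^ m) s = z) ` S \<Longrightarrow> a \<le> 1" using b by blast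
    qed
  qed
qed

lemma pred_exists:
  assumes "(g ^^ m) b1 = b0" "b1 \<noteq> b0" "b1 \<in> B" "\<forall>x\<in>B. g x \<in> B"
  shows "\<exists>b'\<in>B. b' \<noteq> b0 \<and> g b' = b0"
  using assms
proof (induction m arbitrary: b1)
  case 0 then show ?case by simp
next
  case (Suc m)
  show ?case
  proof (cases "g b1 = b0")
    case True then show ?thesis using Suc by blast
  next
    case False
    have "(g ^^ m) (g b1) = b0" using Suc(2) by (simp add: funpow_Suc_right del: funpow.simps)
    then show ?thesis using Suc False by blast
  qed
qed

lemma prod_funpow: "(fds_prod_map fA fB ^^ m) (a, b) = ((fA ^^ m) a, (fB ^^ m) b)"
  by (induction m) (auto simp: fds_prod_map_def)

theorem mainTheorem7:
  fixes S :: "'a set" and f :: "'a \<Rightarrow> 'a"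
  assumes "linear_dendron S f"
  shows "reducible S f \<longleftrightarrow> is_star S f \<and> composite (card S)"
proof -
  have dend: "dendron S f" using assms unfolding linear_dendron_def by blast
  obtain z where z: "z \<in> S" "f z = z" using dend unfolding dendron_def by blast
  have fin: "finite S" using dend unfolding dendron_def fds_def by auto
  have ne: "S \<noteq> {}" using z by auto
  have fS: "\<forall>x\<in>S. f x \<in> S" using dend unfolding dendron_def fds_def by auto
  have lin: "\<forall>s\<in>S. f s \<noteq> s \<longrightarrow> card {t \<in> S. f t = s} \<le> 1"
    using assms unfolding linear_dendron_def by blast
  have "is_star S f \<longleftrightarrow> depth S f \<le> 1" using assms unfolding is_star_def by blast
  then have star_iff: "is_star S f \<longleftrightarrow> (\<forall>s\<in>S. f s = z)"
    using star_char[OF dend z] by simp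
  show ?thesis
  proof
    assume "reducible S f"
    then obtain SA fA SB fB where A: "fds (SA::nat set) fA" and B: "fds (SB::nat set) fB"
      and cA: "card SA < card S" and cB: "card SB < card S"
      and iso: "fds_iso (SA \<times> SB) (fds_prod_map fA fB) S f"
      unfolding reducible_def by blast
    let ?F = "fds_prod_map fA fB"
    obtain h where h: "bij_betw h (SA \<times> SB) S" and hc: "\<forall>p\<in>SA \<times> SB. h (?F p) = f (h p)"
      using iso unfolding fds_iso_def by blast
    have finA: "finite SA" and finB: "finite SB" using A B unfolding fds_def by auto
    have fA: "\<forall>x\<in>SA. fA x \<in> SA" and fB: "\<forall>x\<in>SB. fB x \<in> SB" using A B unfolding fds_def by auto
    have Fin: "?F p \<in> SA \<times> SB" if "p \<in> SA \<times> SB" for p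
      using that fA fB by (auto simp: fds_prod_map_def)
    have cardS: "card S = card SA * card SB"
      using bij_betw_same_card[OF h] by (simp add: card_cartesian_product)
    have injh: "inj_on h (SA \<times> SB)" using bij_betw_imp_inj_on[OF h] .
    have himg: "h ` (SA \<times> SB) = S" using bij_betw_imp_surj_on[OF h] .
    have "z \<in> h ` (SA \<times> SB)" using himg z(1) by simp
    then obtain p0 where p0: "p0 \<in> SA \<times> SB" "h p0 = z" by (metis imageE)
    obtain a0 b0 where "p0 = (a0, b0)" by (cases p0)
    then have ab0: "(a0, b0) \<in> SA \<times> SB" "h (a0, b0) = z" using p0 by auto
    have "h (?F (a0, b0)) = h (a0, b0)" using hc[rule_format, OF ab0(1)] ab0(2) z(2) by simp
    then have Ffix: "?F (a0, b0) = (a0, b0)"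
      using inj_onD[OF injh _ Fin[OF ab0(1)] ab0(1)] by blast
    then have fa0: "fA a0 = a0" and fb0: "fB b0 = b0" by (auto simp: fds_prod_map_def)
    have ufix: "p = (a0, b0)" if "p \<in> SA \<times> SB" "?F p = p" for p
    proof -
      have "f (h p) = h p" using hc[rule_format, OF that(1)] that(2) by simp
      moreover have "h p \<in> S" using that himg by blast
      ultimately have "h p = z" using fixpt_eq[OF dend z] fixpt_eq[OF dend, of "h p"] by simp
      then have "h p = h (a0, b0)" using ab0 by simp
      then show ?thesis using inj_onD[OF injh _ that(1) ab0(1)] by blast
    qed
    have reach: "\<exists>m. (?F ^^ m) p = (a0, b0)" if "p \<in> SA \<times> SB" for p
    proof -
      have hpS: "h p \<in> S" using that himg by blast
      have "fds_connected S f" using dend unfolding dendron_def by blast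
      then obtain m where m: "(f ^^ m) (h p) = z"
        using reach_fix[of S f z "h p", OF _ _ z hpS] dend unfolding dendron_def by blast
      have "h ((?F ^^ k) p) = (f ^^ k) (h p) \<and> (?F ^^ k) p \<in> SA \<times> SB" for k
      proof (induction k)
        case 0 then show ?case using that by simp
      next
        case (Suc k)
        then have ih: "h ((?F ^^ k) p) = (f ^^ k) (h p)" "(?F ^^ k) p \<in> SA \<times> SB" by auto
        show ?case using hc[rule_format, OF ih(2)] Fin[OF ih(2)] ih(1) by simp
      qed
      then have "h ((?F ^^ m) p) = h (a0, b0)" "(?F ^^ m) p \<in> SA \<times> SB" using m ab0 by auto
      then show ?thesis using injh ab0 by (metis inj_on_def)
    qed
    have nopred2: "False" if "p \<in> SA \<times> SB" "?F p \<noteq> p" "q1 \<in> SA \<times> SB" "q2 \<in> SA \<times> SB"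
      "q1 \<noteq> q2" "?F q1 = p" "?F q2 = p" for p q1 q2
    proof -
      have hp1: "h p \<in> S" using that himg by blast
      have "h (?F p) \<noteq> h p" using injh Fin that(1,2) unfolding inj_on_def by blast
      then have hp2: "f (h p) \<noteq> h p" using hc that(1) by simp
      have "f (h q1) = h p" using hc[rule_format, OF that(3)] that(6) by simp
      moreover have "f (h q2) = h p" using hc[rule_format, OF that(4)] that(7) by simp
      moreover have "h q1 \<in> S" "h q2 \<in> S" using that(3,4) himg by blast+
      ultimately have "{h q1, h q2} \<subseteq> {t \<in> S. f t = h p}" by blast
      moreover have "h q1 \<noteq> h q2" using injh that by (metis inj_on_def)
      ultimately have "2 \<le> card {t \<in> S. f t = h p}"
        using fin card_mono[of "{t \<in> S. f t = h p}" "{h q1, h q2}"] by simp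
      then show False using lin hp1 hp2 by fastforce
    qed
    have SA0: "SA \<noteq> {}" "SB \<noteq> {}" using ab0 by auto
    have cA2: "card SA \<ge> 2"
    proof -
      have "card SA \<noteq> 0" using SA0 finA by simp
      moreover have "card SA \<noteq> 1" using cB cardS by auto
      ultimately show ?thesis by linarith
    qed
    have cB2: "card SB \<ge> 2"
    proof -
      have "card SB \<noteq> 0" using SA0 finB by simp
      moreover have "card SB \<noteq> 1" using cA cardS by auto
      ultimately show ?thesis by linarith
    qed
    have "\<exists>a1. a1 \<in> SA \<and> a1 \<noteq> a0"
    proof (rule ccontr)
      assume "\<not> ?thesis"
      then have "SA \<subseteq> {a0}" by blast
      then have "card SA \<le> 1" using card_mono[of "{a0}" SA] by simp
      then show False using cA2 by simp
    qed
    then obtain a1 where a1: "a1 \<in> SA" "a1 \<noteq> a0" by blast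
    have "\<exists>b1. b1 \<in> SB \<and> b1 \<noteq> b0"
    proof (rule ccontr)
      assume "\<not> ?thesis"
      then have "SB \<subseteq> {b0}" by blast
      then have "card SB \<le> 1" using card_mono[of "{b0}" SB] by simp
      then show False using cB2 by simp
    qed
    then obtain b1 where b1: "b1 \<in> SB" "b1 \<noteq> b0" by blast
    obtain m where "(?F ^^ m) (a1, b1) = (a0, b0)" using reach a1 b1 by blast
    then have ma: "(fA ^^ m) a1 = a0" and mb: "(fB ^^ m) b1 = b0" by (auto simp: prod_funpow)
    obtain a' where a': "a' \<in> SA" "a' \<noteq> a0" "fA a' = a0" using pred_exists[OF ma a1(2,1) fA] by blast
    obtain b' where b': "b' \<in> SB" "b' \<noteq> b0" "fB b' = b0" using pred_exists[OF mb b1(2,1) fB] by blast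
    have nopA: "False" if "a \<in> SA" "a \<noteq> a0" "x \<in> SA" "fA x = a" for a x
    proof -
      have "?F (a, b0) \<noteq> (a, b0)" using ufix that ab0 by auto
      moreover have "?F (x, b0) = (a, b0)" "?F (x, b') = (a, b0)"
        using that fb0 b' by (auto simp: fds_prod_map_def)
      ultimately show False using nopred2[of "(a, b0)" "(x, b0)" "(x, b')"] that ab0 b' by auto
    qed
    have nopB: "False" if "b \<in> SB" "b \<noteq> b0" "x \<in> SB" "fB x = b" for b x
    proof -
      have "?F (a0, b) \<noteq> (a0, b)" using ufix that ab0 by auto
      moreover have "?F (a0, x) = (a0, b)" "?F (a', x) = (a0, b)"
        using that fa0 a' by (auto simp: fds_prod_map_def)
      ultimately show False using nopred2[of "(a0, b)" "(a0, x)" "(a', x)"] that ab0 a' by auto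
    qed
    have allA: "fA a = a0" if "a \<in> SA" for a using nopA[of "fA a" a] that fA by blast
    have allB: "fB b = b0" if "b \<in> SB" for b using nopB[of "fB b" b] that fB by blast
    have "\<forall>s\<in>S. f s = z"
    proof
      fix s assume "s \<in> S"
      then obtain p where p: "p \<in> SA \<times> SB" "s = h p" using himg by blast
      then have "?F p = (a0, b0)" using allA allB by (auto simp: fds_prod_map_def)
      then show "f s = z" using hc p ab0 by metis
    qed
    moreover have "composite (card S)"
    proof -
      have d: "card SA dvd card S" using cardS by simp
      have "card SA \<noteq> 1" "card SA \<noteq> card S" using cA2 cA by auto
      then have "\<not> prime (card S)" using d prime_nat_iff by blast
      moreover have "card S > 1" using cA2 cA by linarith
      ultimately show ?thesis unfolding composite_def by blast
    qed
    ultimately show "is_star S f \<and> composite (card S)" using star_iff by blast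
  next
    assume a: "is_star S f \<and> composite (card S)"
    then have all: "\<forall>s\<in>S. f s = z" using star_iff by blast
    have "card S > 1" "\<not> prime (card S)" using a unfolding composite_def by auto
    then obtain a b where ab: "card S = a * b" "1 < a" "a < card S" "1 < b" "b < card S"
    proof -
      have "\<not> (\<forall>m. m dvd card S \<longrightarrow> m = 1 \<or> m = card S)"
        using \<open>card S > 1\<close> \<open>\<not> prime (card S)\<close> unfolding prime_nat_iff by simp
      then obtain a where a: "a dvd card S" "a \<noteq> 1" "a \<noteq> card S" by blast
      then obtain b where b: "card S = a * b" by blast
      have "a * b \<noteq> 0" using b \<open>card S > 1\<close> by linarith
      then have "a \<noteq> 0" "b \<noteq> 0" by auto
      moreover have "b \<noteq> 1" using b a by auto
      ultimately have "1 < a" "1 < b" using a by auto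
      moreover have "a * 1 < a * b" using \<open>1 < a\<close> \<open>1 < b\<close> by (intro mult_strict_left_mono) auto
      moreover have "1 * b < a * b" using \<open>1 < a\<close> \<open>1 < b\<close> by (intro mult_strict_right_mono) auto
      ultimately have "1 < a" "1 < b" "a < card S" "b < card S" using b by auto
      then show ?thesis using b that by blast
    qed
    define SA where "SA = {0..<a}"
    define SB where "SB = {0..<b}"
    have cc: "card (SA \<times> SB) = card S" using ab by (simp add: SA_def SB_def card_cartesian_product)
    have fP: "finite (SA \<times> SB)" by (simp add: SA_def SB_def)
    obtain g where g: "bij_betw g (SA \<times> SB) S" using finite_same_card_bij[OF fP fin cc] by blast
    have "z \<in> g ` (SA \<times> SB)" using bij_betw_imp_surj_on[OF g] z(1) by simp
    then obtain q where q: "q \<in> SA \<times> SB" "z = g q" by (rule imageE)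
    have o: "(0, 0) \<in> SA \<times> SB" using ab by (auto simp: SA_def SB_def)
    define h where "h = Fun.swap (0, 0) q g"
    have hb: "bij_betw h (SA \<times> SB) S" unfolding h_def bij_betw_swap_iff[OF o q(1)] by (rule g)
    have h0: "h (0, 0) = z" using q by (simp add: h_def)
    have "fds_iso (SA \<times> SB) (fds_prod_map (\<lambda>_. 0) (\<lambda>_. 0)) S f"
      unfolding fds_iso_def
    proof (intro exI conjI ballI)
      show "bij_betw h (SA \<times> SB) S" by (rule hb)
      fix p assume "p \<in> SA \<times> SB"
      then have "h p \<in> S" using bij_betwE[OF hb] by blast
      then show "h (fds_prod_map (\<lambda>_. 0) (\<lambda>_. 0) p) = f (h p)"
        using all h0 by (auto simp: fds_prod_map_def split: prod.splits)
    qed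
    moreover have "fds SA (\<lambda>_. 0)" "fds SB (\<lambda>_. 0)" using ab by (auto simp: fds_def SA_def SB_def)
    moreover have "card SA < card S" "card SB < card S" using ab by (auto simp: SA_def SB_def)
    ultimately show "reducible S f" unfolding reducible_def by blast
  qed
qed

end
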